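(* Let $L$ be a subspace of $\mathbb{C}^n$ and suppose that $L$ is the (vector space) direct sum of subspaces $L_1,\dots,L_p$. For each $i$ let $F_i$ be the face of the state space $K_n$ of $\mathcal{B}(\mathbb{C}^n)$ associated with $L_i$. Then the convex hull of $F_1,\dots,F_p$ is the direct convex sum of $F_1,\dots,F_p$. In particular, if $x_1,\dots,x_p$ are linearly independent unit vectors in $\mathbb{C}^n$, then the vector states $\omega_{x_1},\dots,\omega_{x_p}$ are linearly independent (over $\mathbb{R}$) and their convex hull is a simplex.
   Context: For a unit vector $x\in\mathbb{C}^n$, $\omega_x$ denotes the vector state $\omega_x(A)=(Ax,x)$ on $\mathcal{B}(\mathbb{C}^n)$; $K_n$ denotes the convex set of states on $\mathcal{B}(\mathbb{C}^n)$. The face of $K_n$ associated with a subspace $M\subseteq\mathbb{C}^n$ (with orthogonal projection $Q$ onto $M$) is $F_Q=\{\omega\in K_n:\omega(Q)=1\}$; it is the convex hull of the vector states $\omega_x$ with $x\in M$ a unit vector. A convex set $C$ is the direct convex sum of convex subsets $C_1,\dots,C_p$ if each $\omega\in C$ can be written uniquely as $\omega=\sum_{i\in I}\lambda_i\omega_i$ with $I\subseteq\{1,\dots,p\}$, $\lambda_i>0$, $\sum_{i\in I}\lambda_i=1$, $\omega_i\in C_i$. A finite-dimensional convex set is a simplex if it is the direct convex sum of finitely many points. *)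

theory Defs
  imports "HOL-Analysis.Analysis"
begin

text \<open>Operators on C^n are represented as complex n x n matrices (type complex^'n^'n),
  functionals on B(C^n) as functions from matrices to complex numbers.\<close>

definition cinner :: "complex^'n \<Rightarrow> complex^'n \<Rightarrow> complex" where
  "cinner x y = (\<Sum>i\<in>UNIV. x$i * cnj (y$i))"

definition madj :: "complex^'n^'n \<Rightarrow> complex^'n^'n" where
  "madj A = (\<chi> i j. cnj (A$j$i))"

definition mscale :: "complex \<Rightarrow> complex^'n^'n \<Rightarrow> complex^'n^'n" where
  "mscale c A = (\<chi> i j. c * A$i$j)"

text \<open>Vector state omega_x(A) = (Ax, x).\<close>
definition vstate :: "complex^'n \<Rightarrow> (complex^'n^'n \<Rightarrow> complex)" where
  "vstate x = (\<lambda>A. cinner (A *v x) x)"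

text \<open>States: positive normalised linear functionals on B(C^n).\<close>
definition is_state :: "(complex^'n^'n \<Rightarrow> complex) \<Rightarrow> bool" where
  "is_state \<omega> \<longleftrightarrow>
     (\<forall>A B. \<omega> (A + B) = \<omega> A + \<omega> B) \<and>
     (\<forall>c A. \<omega> (mscale c A) = c * \<omega> A) \<and>
     (\<forall>A. Im (\<omega> (madj A ** A)) = 0 \<and> Re (\<omega> (madj A ** A)) \<ge> 0) \<and>
     \<omega> (mat 1) = 1"

definition csubspace :: "(complex^'n) set \<Rightarrow> bool" where
  "csubspace S \<longleftrightarrow> 0 \<in> S \<and> (\<forall>x\<in>S. \<forall>y\<in>S. x + y \<in> S) \<and> (\<forall>c. \<forall>x\<in>S. c *s x \<in> S)"

text \<open>Q is the orthogonal projection onto M.\<close>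
definition is_orth_proj :: "complex^'n^'n \<Rightarrow> (complex^'n) set \<Rightarrow> bool" where
  "is_orth_proj Q M \<longleftrightarrow> Q ** Q = Q \<and> madj Q = Q \<and> range (\<lambda>v. Q *v v) = M"

text \<open>The face F_Q of the state space K_n.\<close>
definition face :: "complex^'n^'n \<Rightarrow> (complex^'n^'n \<Rightarrow> complex) set" where
  "face Q = {\<omega>. is_state \<omega> \<and> \<omega> Q = 1}"

text \<open>Convex hull (set of finite convex combinations) of a set of functionals.\<close>
definition fconv_hull :: "('a \<Rightarrow> complex) set \<Rightarrow> ('a \<Rightarrow> complex) set" where
  "fconv_hull S = {f. \<exists>k (c::nat \<Rightarrow> real) g.
      (\<forall>i<k. c i \<ge> 0 \<and> g i \<in> S) \<and> (\<Sum>i<k. c i) = 1 \<and>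
      f = (\<lambda>A. \<Sum>i<k. of_real (c i) * g i A)}"

text \<open>omega = sum_{i in I} lambda_i omega_i with I \<subseteq> {0..<p}, lambda_i > 0, sum = 1, omega_i in C_i.\<close>
definition dcs_rep :: "nat \<Rightarrow> (nat \<Rightarrow> ('a \<Rightarrow> complex) set) \<Rightarrow> ('a \<Rightarrow> complex)
    \<Rightarrow> nat set \<Rightarrow> (nat \<Rightarrow> real) \<Rightarrow> (nat \<Rightarrow> ('a \<Rightarrow> complex)) \<Rightarrow> bool" where
  "dcs_rep p Cs \<omega> I lam w \<longleftrightarrow> I \<subseteq> {..<p} \<and> (\<forall>i\<in>I. lam i > 0 \<and> w i \<in> Cs i) \<and>
      (\<Sum>i\<in>I. lam i) = 1 \<and> \<omega> = (\<lambda>A. \<Sum>i\<in>I. of_real (lam i) * w i A)"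

text \<open>C is the direct convex sum of C_0,...,C_{p-1}.\<close>
definition direct_convex_sum :: "('a \<Rightarrow> complex) set \<Rightarrow> nat \<Rightarrow> (nat \<Rightarrow> ('a \<Rightarrow> complex) set) \<Rightarrow> bool" where
  "direct_convex_sum C p Cs \<longleftrightarrow> (\<forall>\<omega>\<in>C.
      (\<exists>I lam w. dcs_rep p Cs \<omega> I lam w) \<and>
      (\<forall>I lam w J mu v. dcs_rep p Cs \<omega> I lam w \<and> dcs_rep p Cs \<omega> J mu v \<longrightarrow>
          I = J \<and> (\<forall>i\<in>I. lam i = mu i \<and> w i = v i)))"

text \<open>Simplex: direct convex sum of finitely many points (finite-dimensionality is automatic here).\<close>
definition is_simplex :: "('a \<Rightarrow> complex) set \<Rightarrow> bool" where
  "is_simplex C \<longleftrightarrow> (\<exists>m pts. direct_convex_sum C m (\<lambda>i. {pts i}))"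

end

theory Submission
  imports Defs
begin


lemma exists_E:
  fixes Ls :: "nat \<Rightarrow> (complex^'n) set"
  assumes subs: "\<forall>i<p. csubspace (Ls i)"
    and ind: "\<forall>v. (\<forall>i<p. v i \<in> Ls i) \<and> (\<Sum>i<p. v i) = 0 \<longrightarrow> (\<forall>i<p. v i = 0)"
    and ip: "i < p"
  shows "\<exists>E::complex^'n^'n. \<forall>j<p. \<forall>y\<in>Ls j. E *v y = (if j = i then y else 0)"
proof -
  define L where "L = {(\<Sum>j<p. v j) | v. \<forall>j<p. v j \<in> Ls j}"
  obtain B where B: "B \<subseteq> L" "vec.independent B" "L \<subseteq> vec.span B"
    using vec.maximal_independent_subset by blast
  have "\<forall>b\<in>B. \<exists>v. (\<forall>j<p. v j \<in> Ls j) \<and> (\<Sum>j<p. v j) = b"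
    using B(1) unfolding L_def by blast
  then obtain dec where dec: "\<And>b. b \<in> B \<Longrightarrow> (\<forall>j<p. dec b j \<in> Ls j) \<and> (\<Sum>j<p. dec b j) = b"
    by metis
  obtain g where g: "Vector_Spaces.linear (*s) (*s) g" "\<forall>b\<in>B. g b = dec b i"
    using vec.linear_independent_extend[OF B(2), of "\<lambda>b. dec b i"] by blast
  interpret g: Vector_Spaces.linear "(*s)" "(*s)" g by (rule g(1))
  have uniq: "\<And>v w. (\<forall>j<p. v j \<in> Ls j) \<Longrightarrow> (\<forall>j<p. w j \<in> Ls j) \<Longrightarrow>
       (\<Sum>j<p. v j) = (\<Sum>j<p. w j) \<Longrightarrow> \<forall>j<p. v j = w j"
  proof -
    fix v w assume v: "\<forall>j<p. v j \<in> Ls j" and w: "\<forall>j<p. w j \<in> Ls j"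
      and s: "(\<Sum>j<p. v j) = (\<Sum>j<p. w j)"
    have "\<forall>j<p. v j + (-1) *s w j \<in> Ls j"
    proof (intro allI impI)
      fix j assume "j < p"
      then have "v j \<in> Ls j" "w j \<in> Ls j" "csubspace (Ls j)" using v w subs by auto
      then show "v j + (-1) *s w j \<in> Ls j" unfolding csubspace_def by blast
    qed
    moreover have "(\<Sum>j<p. v j + (-1) *s w j) = 0"
      using s by (simp add: sum_subtractf vector_smult_lneg)
    ultimately have "\<forall>j<p. v j + (-1) *s w j = 0" using ind[rule_format, of "\<lambda>j. v j + (-1) *s w j"] by blast
    then show "\<forall>j<p. v j = w j"
      by (simp add: vector_smult_lneg)
  qed
  have key: "\<exists>v. (\<forall>j<p. v j \<in> Ls j) \<and> (\<Sum>j<p. v j) = y \<and> g y = v i" if "y \<in> vec.span B" for y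
    using that
  proof (induction rule: vec.span_induct_alt)
    case base
    show ?case by (rule exI[of _ "\<lambda>_. 0"]) (use subs in \<open>auto simp: csubspace_def\<close>)
  next
    case (step c b y)
    then obtain v where v: "\<forall>j<p. v j \<in> Ls j" "(\<Sum>j<p. v j) = y" "g y = v i" by blast
    show ?case
    proof (rule exI[of _ "\<lambda>j. c *s dec b j + v j"], intro conjI)
      show "\<forall>j<p. c *s dec b j + v j \<in> Ls j"
        using dec[OF step(1)] v(1) subs unfolding csubspace_def by blast
      show "(\<Sum>j<p. c *s dec b j + v j) = c *s b + y"
        using dec[OF step(1)] v(2) by (simp add: sum.distrib vec.scale_sum_right[symmetric])
      show "g (c *s b + y) = c *s dec b i + v i"
        using g(2) step(1) v(3) by (simp add: g.add g.scale)
    qed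
  qed
  show ?thesis
  proof (rule exI[of _ "matrix g"], intro allI impI ballI)
    fix j y assume jp: "j < p" and y: "y \<in> Ls j"
    define d where "d = (\<lambda>k. if k = j then y else (0::complex^'n))"
    have d1: "\<forall>k<p. d k \<in> Ls k" using subs y unfolding d_def csubspace_def by auto
    have d2: "(\<Sum>k<p. d k) = y" using jp unfolding d_def by (simp add: sum.delta)
    have "y \<in> vec.span B" using B(3) d1 d2 unfolding L_def by blast
    then obtain v where v: "\<forall>k<p. v k \<in> Ls k" "(\<Sum>k<p. v k) = y" "g y = v i"
      using key by blast
    have "\<forall>k<p. v k = d k" using uniq[OF v(1) d1] v(2) d2 by simp
    then have "g y = d i" using v(3) ip by simp
    then show "matrix g *v y = (if j = i then y else 0)"
      by (simp add: matrix_works[OF g(1)] d_def)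
  qed
qed



lemma madj_madj[simp]: "madj (madj A) = A"
  by (simp add: madj_def vec_eq_iff)

lemma madj_mult: "madj (A ** B) = madj B ** madj (A::complex^'n^'n)"
  by (simp add: madj_def matrix_matrix_mult_def vec_eq_iff mult.commute)

lemma madj_add: "madj (A + B) = madj A + madj (B::complex^'n^'n)"
  by (simp add: madj_def vec_eq_iff)

lemma madj_diff: "madj (A - B) = madj A - madj (B::complex^'n^'n)"
  by (simp add: madj_def vec_eq_iff)

lemma madj_mat1: "madj (mat 1 :: complex^'n^'n) = mat 1"
  by (simp add: madj_def vec_eq_iff mat_def)

lemma madj_zero: "madj (0 :: complex^'n^'n) = 0"
  by (simp add: madj_def vec_eq_iff)

lemma madj_mscale: "madj (mscale c A) = mscale (cnj c) (madj (A::complex^'n^'n))"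
  by (simp add: madj_def mscale_def vec_eq_iff)

lemma mscale_mult_left: "mscale c A ** B = mscale c (A ** (B::complex^'n^'n))"
  by (simp add: mscale_def matrix_matrix_mult_def vec_eq_iff sum_distrib_left mult.assoc)

lemma mscale_mult_right: "A ** mscale c B = mscale c (A ** (B::complex^'n^'n))"
  by (simp add: mscale_def matrix_matrix_mult_def vec_eq_iff sum_distrib_left mult_ac)

lemma mm_add_r: "(A + B) ** C = A ** C + B ** (C::complex^'n^'n)"
  by (simp add: matrix_matrix_mult_def vec_eq_iff distrib_right sum.distrib)

lemma mm_sub_r: "(A - B) ** C = A ** C - B ** (C::complex^'n^'n)"
  by (simp add: matrix_matrix_mult_def vec_eq_iff left_diff_distrib sum_subtractf)

lemma mm_sub_l: "C ** (A - B) = C ** A - C ** (B::complex^'n^'n)"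
  by (simp add: matrix_matrix_mult_def vec_eq_iff right_diff_distrib sum_subtractf)

lemma state_add: "is_state \<omega> \<Longrightarrow> \<omega> (A + B) = \<omega> A + \<omega> B"
  unfolding is_state_def by blast

lemma state_zero: "is_state \<omega> \<Longrightarrow> \<omega> 0 = 0"
proof -
  assume "is_state \<omega>"
  then have "\<omega> (0 + 0) = \<omega> 0 + \<omega> 0" by (rule state_add)
  then show ?thesis by simp
qed

lemma state_scale: "is_state \<omega> \<Longrightarrow> \<omega> (mscale c A) = c * \<omega> A"
  unfolding is_state_def by blast

lemma state_diff: "is_state \<omega> \<Longrightarrow> \<omega> (A - B) = \<omega> A - \<omega> B"
proof -
  assume "is_state \<omega>"
  then have "\<omega> ((A - B) + B) = \<omega> (A - B) + \<omega> B" by (rule state_add)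
  then show ?thesis by simp
qed

lemma state_pos: "is_state \<omega> \<Longrightarrow> Im (\<omega> (madj A ** A)) = 0 \<and> Re (\<omega> (madj A ** A)) \<ge> 0"
  unfolding is_state_def by blast

lemma quad_zero:
  fixes s c :: complex
  assumes h: "\<And>r::real. Im (of_real r * s + of_real (r^2) * c) = 0 \<and> Re (of_real r * s + of_real (r^2) * c) \<ge> 0"
    and c: "Im c = 0" "Re c \<ge> 0"
  shows "s = 0"
proof -
  have "Im s = 0" using h[of 1] c by simp
  moreover have "Re s = 0"
  proof (rule ccontr)
    assume ne: "Re s \<noteq> 0"
    define D where "D = Re c + 1"
    have D: "D > 0" using c by (simp add: D_def)
    define r where "r = - Re s / D"
    have "0 \<le> Re (of_real r * s + of_real (r^2) * c)" using h by blast
    also have "\<dots> = r * Re s + r^2 * Re c" using c by simp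
    also have "\<dots> = -((Re s)^2 / D^2)"
    proof -
      have "r * Re s + r^2 * Re c = (-((Re s)^2 * D) + (Re s)^2 * Re c) / D^2"
        using D by (simp add: r_def power2_eq_square divide_simps)
      also have "-((Re s)^2 * D) + (Re s)^2 * Re c = -((Re s)^2)" by (simp add: D_def algebra_simps)
      finally show ?thesis by simp
    qed
    also have "\<dots> < 0" using ne D by simp
    finally show False by simp
  qed
  ultimately show ?thesis by (simp add: complex_eq_iff)
qed

lemma pos_lemma:
  assumes st: "is_state \<omega>" and P: "madj P = P" "P ** P = P" "\<omega> P = 0"
  shows "\<omega> (P ** Y) = 0 \<and> \<omega> (madj Y ** P) = 0"
proof -
  define a where "a = \<omega> (P ** Y)"
  define b where "b = \<omega> (madj Y ** P)"
  define c where "c = \<omega> (madj Y ** Y)"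
  have exp: "\<omega> (madj (P + mscale t Y) ** (P + mscale t Y)) = t * a + cnj t * b + (cnj t * t) * c" for t
  proof -
    have "madj (P + mscale t Y) ** (P + mscale t Y) =
          P ** P + mscale t (P ** Y) + (mscale (cnj t) (madj Y ** P) + mscale (cnj t * t) (madj Y ** Y))"
      by (simp add: madj_add madj_mscale P(1) matrix_add_ldistrib mm_add_r
            mscale_mult_left mscale_mult_right)
         (simp add: mscale_def vec_eq_iff algebra_simps)
    then show ?thesis
      using st P by (simp add: state_add state_scale a_def b_def c_def)
  qed
  have c: "Im c = 0" "Re c \<ge> 0" using state_pos[OF st, of Y] c_def by auto
  have s1: "a + b = 0"
  proof (rule quad_zero[OF _ c])
    fix r :: real
    have "of_real r * (a + b) + of_real (r^2) * c = \<omega> (madj (P + mscale (of_real r) Y) ** (P + mscale (of_real r) Y))"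
      by (simp add: exp algebra_simps power2_eq_square)
    then show "Im (of_real r * (a + b) + of_real (r^2) * c) = 0 \<and> Re (of_real r * (a + b) + of_real (r^2) * c) \<ge> 0"
      using state_pos[OF st] by simp
  qed
  have s2: "\<i> * (a - b) = 0"
  proof (rule quad_zero[OF _ c])
    fix r :: real
    have "of_real r * (\<i> * (a - b)) + of_real (r^2) * c = \<omega> (madj (P + mscale (\<i> * of_real r) Y) ** (P + mscale (\<i> * of_real r) Y))"
      by (simp add: exp algebra_simps power2_eq_square)
    then show "Im (of_real r * (\<i> * (a - b)) + of_real (r^2) * c) = 0 \<and> Re (of_real r * (\<i> * (a - b)) + of_real (r^2) * c) \<ge> 0"
      using state_pos[OF st] by simp
  qed
  from s1 s2 have "a = 0" "b = 0" by auto
  then show ?thesis by (simp add: a_def b_def)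
qed

lemma face_support:
  assumes w: "\<omega> \<in> face Q" and Q: "is_orth_proj Q M"
  shows "\<omega> A = \<omega> (Q ** A ** Q)"
proof -
  have st: "is_state \<omega>" and wQ: "\<omega> Q = 1" using w by (auto simp: face_def)
  have QQ: "Q ** Q = Q" "madj Q = Q" using Q by (auto simp: is_orth_proj_def)
  define P where "P = mat 1 - Q"
  have P1: "madj P = P" by (simp add: P_def madj_diff madj_mat1 QQ)
  have P2: "P ** P = P"
    by (simp add: P_def mm_sub_l mm_sub_r QQ)
  have P3: "\<omega> P = 0" using st wQ by (simp add: P_def state_diff is_state_def)
  have L: "\<omega> (P ** Y) = 0" for Y using pos_lemma[OF st P1 P2 P3] by blast
  have R: "\<omega> (X ** P) = 0" for X using pos_lemma[OF st P1 P2 P3, of "madj X"] by simp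
  have "A = Q ** A + P ** A" by (simp add: P_def mm_sub_r)
  then have "\<omega> A = \<omega> (Q ** A)" using L st by (metis state_add add.right_neutral)
  also have "Q ** A = Q ** A ** Q + Q ** A ** P" by (simp add: P_def mm_sub_l)
  then have "\<omega> (Q ** A) = \<omega> (Q ** A ** Q)" using R st by (metis state_add add.right_neutral)
  finally show ?thesis .
qed



lemma core:
  fixes Qs Es :: "nat \<Rightarrow> complex^'n^'n" and \<phi> :: "nat \<Rightarrow> complex^'n^'n \<Rightarrow> complex"
  assumes sa: "\<forall>j<p. madj (Qs j) = Qs j"
    and E: "\<forall>i<p. \<forall>j<p. Es i ** Qs j = (if i = j then Qs j else 0)"
    and sup: "\<forall>j<p. \<forall>A. \<phi> j A = \<phi> j (Qs j ** A ** Qs j)"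
    and z: "\<forall>j<p. \<phi> j 0 = 0"
    and sum0: "\<forall>A. (\<Sum>j<p. \<phi> j A) = 0"
    and ip: "i < p"
  shows "\<phi> i A = 0"
proof -
  define T where "T = madj (Es i) ** A ** Es i"
  have "\<phi> j T = (if j = i then \<phi> i A else 0)" if jp: "j < p" for j
  proof -
    have "\<phi> j T = \<phi> j (Qs j ** T ** Qs j)" using sup jp by blast
    also have "Qs j ** T ** Qs j = madj (Es i ** Qs j) ** A ** (Es i ** Qs j)"
      using sa jp by (simp add: T_def madj_mult matrix_mul_assoc)
    also have "\<dots> = (if j = i then Qs i ** A ** Qs i else 0)"
      using E ip jp sa by (auto simp: madj_zero)
    finally have "\<phi> j T = \<phi> j (if j = i then Qs i ** A ** Qs i else 0)" .
    moreover have "\<phi> i (Qs i ** A ** Qs i) = \<phi> i A" using sup ip by metis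
    moreover have "\<phi> j 0 = 0" using z jp by blast
    ultimately show ?thesis by (cases "j = i") simp_all
  qed
  then have "(\<Sum>j<p. \<phi> j T) = (\<Sum>j<p. if j = i then \<phi> i A else 0)" by simp
  also have "\<dots> = \<phi> i A" using ip by (simp add: sum.delta)
  finally show ?thesis using sum0 by simp
qed

lemma sum_ind: "I \<subseteq> {..<(p::nat)} \<Longrightarrow> (\<Sum>i<p. if i \<in> I then f i else 0) = (\<Sum>i\<in>I. f i)"
proof -
  assume "I \<subseteq> {..<p}"
  then have "{..<p} \<inter> I = I" by blast
  moreover have "sum f ({..<p} \<inter> I) = (\<Sum>x<p. if x \<in> I then f x else 0)"
    by (rule sum.inter_restrict) simp
  ultimately show ?thesis by simp
qed

lemma uniq:
  fixes Qs Es :: "nat \<Rightarrow> complex^'n^'n" and Cs :: "nat \<Rightarrow> (complex^'n^'n \<Rightarrow> complex) set"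
  assumes sa: "\<forall>j<p. madj (Qs j) = Qs j"
    and E: "\<forall>i<p. \<forall>j<p. Es i ** Qs j = (if i = j then Qs j else 0)"
    and C: "\<forall>j<p. \<forall>\<psi>\<in>Cs j. \<psi> (Qs j) = 1 \<and> \<psi> 0 = 0 \<and> (\<forall>A. \<psi> A = \<psi> (Qs j ** A ** Qs j))"
    and r1: "dcs_rep p Cs \<omega> I lam w" and r2: "dcs_rep p Cs \<omega> J mu v"
  shows "I = J \<and> (\<forall>i\<in>I. lam i = mu i \<and> w i = v i)"
proof -
  have I: "I \<subseteq> {..<p}" "\<forall>i\<in>I. lam i > 0 \<and> w i \<in> Cs i" "\<omega> = (\<lambda>A. \<Sum>i\<in>I. of_real (lam i) * w i A)"
    using r1 unfolding dcs_rep_def by auto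
  have J: "J \<subseteq> {..<p}" "\<forall>i\<in>J. mu i > 0 \<and> v i \<in> Cs i" "\<omega> = (\<lambda>A. \<Sum>i\<in>J. of_real (mu i) * v i A)"
    using r2 unfolding dcs_rep_def by auto
  define \<phi> where "\<phi> = (\<lambda>i A. (if i \<in> I then of_real (lam i) * w i A else 0)
                            - (if i \<in> J then of_real (mu i) * v i A else 0))"
  have sum0: "\<forall>A. (\<Sum>j<p. \<phi> j A) = 0"
  proof
    fix A
    have "(\<Sum>j<p. \<phi> j A) = (\<Sum>i\<in>I. of_real (lam i) * w i A) - (\<Sum>i\<in>J. of_real (mu i) * v i A)"
      unfolding \<phi>_def sum_subtractf sum_ind[OF I(1)] sum_ind[OF J(1)] ..
    also have "\<dots> = 0" using I(3) J(3) by (metis diff_self)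
    finally show "(\<Sum>j<p. \<phi> j A) = 0" .
  qed
  have wI: "w j A = w j (Qs j ** A ** Qs j)" if "j \<in> I" for j A
  proof -
    have "j < p" "w j \<in> Cs j" using that I(1) I(2) by auto
    then show ?thesis using C by blast
  qed
  have vJ: "v j A = v j (Qs j ** A ** Qs j)" if "j \<in> J" for j A
  proof -
    have "j < p" "v j \<in> Cs j" using that J(1) J(2) by auto
    then show ?thesis using C by blast
  qed
  have sup: "\<forall>j<p. \<forall>A. \<phi> j A = \<phi> j (Qs j ** A ** Qs j)"
  proof (intro allI impI)
    fix j A assume "j < p"
    show "\<phi> j A = \<phi> j (Qs j ** A ** Qs j)"
      unfolding \<phi>_def using wI[of j A] vJ[of j A] by (cases "j \<in> I"; cases "j \<in> J") auto
  qed
  have z: "\<forall>j<p. \<phi> j 0 = 0"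
  proof (intro allI impI)
    fix j assume "j < p"
    then have "j \<in> I \<Longrightarrow> w j 0 = 0" "j \<in> J \<Longrightarrow> v j 0 = 0" using C I(2) J(2) by auto
    then show "\<phi> j 0 = 0" unfolding \<phi>_def by auto
  qed
  have phi0: "\<phi> i A = 0" if "i < p" for i A
    using core[OF sa E sup z sum0 that] .
  have eqI: "i \<in> I \<longleftrightarrow> i \<in> J" and eqlam: "i \<in> I \<Longrightarrow> lam i = mu i" if ip: "i < p" for i
  proof -
    have "\<phi> i (Qs i) = 0" using phi0 ip by blast
    have wq: "i \<in> I \<Longrightarrow> w i (Qs i) = 1" "i \<in> J \<Longrightarrow> v i (Qs i) = 1"
      using C I(2) J(2) ip by auto
    have "\<phi> i (Qs i) = of_real ((if i \<in> I then lam i else 0) - (if i \<in> J then mu i else 0))"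
      unfolding \<phi>_def using wq by (cases "i \<in> I"; cases "i \<in> J") simp_all
    then have e: "(if i \<in> I then lam i else 0) - (if i \<in> J then mu i else 0) = 0"
      using \<open>\<phi> i (Qs i) = 0\<close> by simp
    show "i \<in> I \<longleftrightarrow> i \<in> J" using e I(2) J(2) by (auto split: if_splits)
    show "i \<in> I \<Longrightarrow> lam i = mu i" using e I(2) J(2) by (auto split: if_splits)
  qed
  have IJ: "I = J" using eqI I(1) J(1) by blast
  show ?thesis
  proof (intro conjI ballI)
    show "I = J" by fact
    fix i assume iI: "i \<in> I"
    then have ip: "i < p" using I(1) by blast
    show lm: "lam i = mu i" using eqlam ip iI by blast
    show "w i = v i"
    proof
      fix A
      have "\<phi> i A = 0" using phi0 ip by blast
      then have "of_real (lam i) * (w i A - v i A) = 0"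
        using iI IJ lm unfolding \<phi>_def by (simp add: algebra_simps)
      then show "w i A = v i A" using I(2) iI by auto
    qed
  qed
qed


lemma face_cvx:
  assumes "\<forall>k<K. 0 \<le> c k \<and> g k \<in> face Q" "(\<Sum>k<K. c k) = 1"
  shows "(\<lambda>A. \<Sum>k<K. of_real (c k) * g k A) \<in> face Q"
proof -
  have st: "is_state (g k)" and gq: "g k Q = 1" if "k < K" for k
    using assms(1) that by (auto simp: face_def)
  have "is_state (\<lambda>A. \<Sum>k<K. of_real (c k) * g k A)"
    unfolding is_state_def
  proof (intro conjI allI)
    fix A B
    show "(\<Sum>k<K. of_real (c k) * g k (A + B)) = (\<Sum>k<K. of_real (c k) * g k A) + (\<Sum>k<K. of_real (c k) * g k B)"
      by (simp add: state_add[OF st] distrib_left sum.distrib)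
  next
    fix d A
    show "(\<Sum>k<K. of_real (c k) * g k (mscale d A)) = d * (\<Sum>k<K. of_real (c k) * g k A)"
      by (simp add: state_scale[OF st] sum_distrib_left mult_ac)
  next
    fix A
    have i: "Im (g k (madj A ** A)) = 0" and r: "Re (g k (madj A ** A)) \<ge> 0" if "k < K" for k
      using state_pos[OF st[OF that]] by auto
    show "Im (\<Sum>k<K. of_real (c k) * g k (madj A ** A)) = 0"
      by (simp add: Im_sum i)
    show "Re (\<Sum>k<K. of_real (c k) * g k (madj A ** A)) \<ge> 0"
      unfolding Re_sum using assms(1) r by (auto intro!: sum_nonneg mult_nonneg_nonneg)
  next
    have "(\<Sum>k<K. of_real (c k) * g k (mat 1)) = (\<Sum>k<K. of_real (c k))"
      using st by (simp add: is_state_def)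
    then show "(\<Sum>k<K. of_real (c k) * g k (mat 1)) = 1"
      using assms(2) by (metis of_real_1 of_real_sum)
  qed
  moreover have "(\<Sum>k<K. of_real (c k) * g k Q) = 1"
    using gq assms(2) by (simp) (metis of_real_1 of_real_sum)
  ultimately show ?thesis by (simp add: face_def)
qed

lemma sing_cvx:
  assumes "\<forall>k<K. 0 \<le> c k \<and> g k \<in> {pt}" "(\<Sum>k<K. c k) = 1"
  shows "(\<lambda>A. \<Sum>k<K. of_real (c k) * g k A) \<in> {pt}"
proof -
  have "(\<Sum>k<K. of_real (c k) * g k A) = pt A" for A
  proof -
    have "(\<Sum>k<K. of_real (c k) * g k A) = (\<Sum>k<K. of_real (c k) * pt A)" using assms(1) by simp
    also have "\<dots> = of_real (\<Sum>k<K. c k) * pt A" by (simp add: sum_distrib_right)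
    finally show ?thesis using assms(2) by simp
  qed
  then show ?thesis by auto
qed



lemma exi:
  fixes Cs :: "nat \<Rightarrow> ('a \<Rightarrow> complex) set"
  assumes cvx: "\<forall>i<p. \<forall>(K::nat) c g. (\<forall>k<K. 0 \<le> c k \<and> g k \<in> Cs i) \<and> (\<Sum>k<K. c k) = 1 \<longrightarrow>
                  (\<lambda>A. \<Sum>k<K. of_real (c k) * g k A) \<in> Cs i"
    and om: "\<omega> \<in> fconv_hull (\<Union>i<p. Cs i)"
  shows "\<exists>I lam w. dcs_rep p Cs \<omega> I lam w"
proof -
  obtain K c g where cg0: "(\<forall>k<(K::nat). c k \<ge> 0 \<and> g k \<in> (\<Union>i<p. Cs i)) \<and> (\<Sum>k<K. c k) = 1 \<and>
      \<omega> = (\<lambda>A. \<Sum>k<K. of_real (c k) * g k A)"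
    using om unfolding fconv_hull_def mem_Collect_eq by (elim exE) (rule that, assumption)
  note cg = cg0[THEN conjunct1] cg0[THEN conjunct2, THEN conjunct1] cg0[THEN conjunct2, THEN conjunct2]
  have "\<forall>k. \<exists>i. k < K \<longrightarrow> i < p \<and> g k \<in> Cs i" using cg(1) by (meson UN_E lessThan_iff)
  then obtain idx where idx: "\<And>k. k < K \<Longrightarrow> idx k < p \<and> g k \<in> Cs (idx k)"
    using choice[of "\<lambda>k i. k < K \<longrightarrow> i < p \<and> g k \<in> Cs i"] by blast
  define lam where "lam = (\<lambda>i. \<Sum>k<K. if idx k = i then c k else 0)"
  define I where "I = {i. i < p \<and> lam i > 0}"
  have lam_nn: "lam i \<ge> 0" for i unfolding lam_def using cg(1) by (auto intro!: sum_nonneg)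
  have zero_off: "c k = 0" if kK: "k < K" and nI: "idx k \<notin> I" for k
  proof -
    have l0: "lam (idx k) = 0" using kK nI idx[of k] lam_nn[of "idx k"] unfolding I_def by auto
    have nn: "\<And>k'. k' \<in> {..<K} \<Longrightarrow> 0 \<le> (if idx k' = idx k then c k' else 0)" using cg(1) by simp
    have iff: "(\<Sum>k'\<in>{..<K}. (if idx k' = idx k then c k' else 0)) = 0 \<longleftrightarrow>
         (\<forall>k'\<in>{..<K}. (if idx k' = idx k then c k' else 0) = 0)"
      by (rule sum_nonneg_eq_0_iff) (simp_all only: finite_lessThan nn)
    have "\<forall>k'\<in>{..<K}. (if idx k' = idx k then c k' else 0) = 0"
      using iff l0 unfolding lam_def by simp
    then have "(if idx k = idx k then c k else 0) = 0" using kK by blast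
    then show ?thesis by simp
  qed
  have wit: "\<exists>k. k < K \<and> idx k = i \<and> c k > 0" if iI: "i \<in> I" for i
  proof (rule ccontr)
    assume nw: "\<not> ?thesis"
    have "(if idx k = i then c k else 0) = 0" if "k < K" for k
    proof (cases "idx k = i")
      case True
      then have "\<not> c k > 0" using nw that by blast
      moreover have "c k \<ge> 0" using cg(1) that by blast
      ultimately show ?thesis using True by simp
    qed simp
    then have "lam i = 0" unfolding lam_def by simp
    then show False using iI unfolding I_def by simp
  qed
  define k0 where "k0 = (\<lambda>i. SOME k. k < K \<and> idx k = i \<and> c k > 0)"
  have k0: "k0 i < K \<and> idx (k0 i) = i" if "i \<in> I" for i
    using someI_ex[OF wit[OF that]] unfolding k0_def by blast
  define c' where "c' = (\<lambda>i k. if idx k = i then c k / lam i else 0)"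
  define g' where "g' = (\<lambda>i k. if idx k = i then g k else g (k0 i))"
  define w where "w = (\<lambda>i A. \<Sum>k<K. of_real (c' i k) * g' i k A)"
  have wC: "w i \<in> Cs i" if "i \<in> I" for i
  proof -
    have ip: "i < p" and lp: "lam i > 0" using that unfolding I_def by auto
    have "\<forall>k<K. 0 \<le> c' i k \<and> g' i k \<in> Cs i"
      using cg(1) idx k0[OF that] idx[of "k0 i"] lp unfolding c'_def g'_def by auto
    moreover have "(\<Sum>k<K. c' i k) = 1"
    proof -
      have "(\<Sum>k<K. c' i k) = (\<Sum>k<K. (if idx k = i then c k else 0) / lam i)"
        by (rule sum.cong) (auto simp: c'_def)
      also have "\<dots> = lam i / lam i" by (simp only: sum_divide_distrib[symmetric] lam_def)
      also have "\<dots> = 1" using lp by simp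
      finally show ?thesis .
    qed
    ultimately show ?thesis using cvx[rule_format, OF ip, of K "c' i" "g' i"] unfolding w_def by simp
  qed
  define F where "F = (\<lambda>i A. \<Sum>k<K. if idx k = i then of_real (c k) * g k A else 0)"
  have lw: "of_real (lam i) * w i A = F i A" if "i \<in> I" for i A
  proof -
    have lp: "lam i > 0" using that unfolding I_def by auto
    have "of_real (lam i) * w i A = (\<Sum>k<K. of_real (lam i) * (of_real (c' i k) * g' i k A))"
      unfolding w_def by (simp add: sum_distrib_left)
    also have "\<dots> = F i A" unfolding F_def
      by (rule sum.cong) (use lp in \<open>auto simp: c'_def g'_def\<close>)
    finally show ?thesis .
  qed
  have Foff: "F i A = 0" if "i < p" "i \<notin> I" for i A
    unfolding F_def by (rule sum.neutral) (use zero_off that in auto)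
  have lamoff: "lam i = 0" if "i < p" "i \<notin> I" for i
    unfolding lam_def by (rule sum.neutral) (use zero_off that in auto)
  have Isub: "I \<subseteq> {..<p}" unfolding I_def by auto
  have sumF: "(\<Sum>i<p. F i A) = \<omega> A" for A
  proof -
    have "(\<Sum>i<p. F i A) = (\<Sum>k<K. \<Sum>i<p. if idx k = i then of_real (c k) * g k A else 0)"
      unfolding F_def by (rule sum.swap)
    also have "\<dots> = (\<Sum>k<K. of_real (c k) * g k A)"
      by (rule sum.cong) (use idx in \<open>auto simp: sum.delta'\<close>)
    finally show ?thesis using cg(3) by simp
  qed
  have sumlam: "(\<Sum>i<p. lam i) = 1"
  proof -
    have "(\<Sum>i<p. lam i) = (\<Sum>k<K. \<Sum>i<p. if idx k = i then c k else 0)"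
      unfolding lam_def by (rule sum.swap)
    also have "\<dots> = (\<Sum>k<K. c k)"
      by (rule sum.cong) (use idx in \<open>auto simp: sum.delta'\<close>)
    finally show ?thesis using cg(2) by simp
  qed
  show ?thesis
  proof (intro exI)
    show "dcs_rep p Cs \<omega> I lam w"
      unfolding dcs_rep_def
    proof (intro conjI ballI)
      show "I \<subseteq> {..<p}" by fact
      fix i assume "i \<in> I" then show "lam i > 0" "w i \<in> Cs i" using wC unfolding I_def by auto
    next
      have "(\<Sum>i\<in>I. lam i) = (\<Sum>i<p. lam i)"
        by (rule sum.mono_neutral_left) (use Isub lamoff in auto)
      then show "(\<Sum>i\<in>I. lam i) = 1" using sumlam by simp
    next
      show "\<omega> = (\<lambda>A. \<Sum>i\<in>I. of_real (lam i) * w i A)"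
      proof
        fix A
        have "(\<Sum>i\<in>I. of_real (lam i) * w i A) = (\<Sum>i\<in>I. F i A)" using lw by simp
        also have "\<dots> = (\<Sum>i<p. F i A)"
          by (rule sum.mono_neutral_left) (use Isub Foff in auto)
        finally show "\<omega> A = (\<Sum>i\<in>I. of_real (lam i) * w i A)" using sumF by simp
      qed
    qed
  qed
qed



lemma cinner_scale: "cinner (c *s y) z = c * cinner y (z::complex^'n)"
  by (simp add: cinner_def sum_distrib_left mult.assoc)

lemma mv_scale: "A *v (c *s y) = c *s (A *v (y::complex^'n))"
  by (simp add: matrix_vector_mult_def vec_eq_iff sum_distrib_left mult_ac)

lemma cinner_norm: "norm (y::complex^'n) = 1 \<Longrightarrow> cinner y y = 1"
proof -
  assume n: "norm y = 1"
  have "cinner y y = (\<Sum>i\<in>UNIV. of_real ((norm (y$i))^2))"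
    unfolding cinner_def by (rule sum.cong) (simp_all only: complex_norm_square)
  also have "\<dots> = of_real (\<Sum>i\<in>UNIV. (norm (y$i))^2)" by simp
  also have "(\<Sum>i\<in>UNIV. (norm (y$i))^2) = (norm y)^2"
    by (simp add: norm_vec_def L2_set_def sum_nonneg)
  finally show ?thesis using n by simp
qed

definition rk1 :: "complex^'n \<Rightarrow> complex^'n^'n" where
  "rk1 y = (\<chi> a b. y$a * cnj (y$b))"

lemma rk1_mv: "rk1 y *v v = cinner v y *s y"
  by (simp add: rk1_def matrix_vector_mult_def cinner_def vec_eq_iff sum_distrib_left mult_ac)

lemma rk1_adj: "madj (rk1 y) = rk1 y"
  by (simp add: rk1_def madj_def vec_eq_iff mult.commute)

lemma vstate_support:
  assumes "cinner y y = 1"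
  shows "vstate y A = vstate y (rk1 y ** A ** rk1 y)"
proof -
  have "(rk1 y ** A ** rk1 y) *v y = rk1 y *v (A *v (rk1 y *v y))"
    by (simp add: matrix_vector_mul_assoc matrix_mul_assoc)
  also have "\<dots> = cinner (A *v y) y *s y" using assms by (simp add: rk1_mv)
  finally show ?thesis using assms by (simp add: vstate_def cinner_scale)
qed

lemma vstate_zero: "vstate y 0 = 0"
  by (simp add: vstate_def cinner_def)

lemma vstate_rk1: "cinner y y = 1 \<Longrightarrow> vstate y (rk1 y) = 1"
  by (simp add: vstate_def rk1_mv cinner_scale)

lemma vstate_one: "cinner y y = 1 \<Longrightarrow> vstate y (mat 1) = 1"
  by (simp add: vstate_def)

lemma E_on_proj:
  assumes "\<forall>v. Q *v v \<in> S" and "\<forall>y\<in>S. E *v y = (if j = i then y else 0)"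
  shows "E ** Q = (if i = j then Q else (0::complex^'n^'n))"
  unfolding matrix_eq
proof
  fix v
  have "(E ** Q) *v v = E *v (Q *v v)" by (simp add: matrix_vector_mul_assoc)
  also have "\<dots> = (if j = i then Q *v v else 0)" using assms by blast
  finally show "(E ** Q) *v v = (if i = j then Q else 0) *v v"
    by (auto simp: matrix_vector_mult_def vec_eq_iff)
qed

theorem mainTheorem1:
  shows
  "(\<forall>(L :: (complex^'n) set) (Ls :: nat \<Rightarrow> (complex^'n) set) (Qs :: nat \<Rightarrow> complex^'n^'n) (p::nat).
      (\<forall>i<p. csubspace (Ls i)) \<and>
      L = {(\<Sum>i<p. v i) | v. \<forall>i<p. v i \<in> Ls i} \<and>
      (\<forall>v. (\<forall>i<p. v i \<in> Ls i) \<and> (\<Sum>i<p. v i) = 0 \<longrightarrow> (\<forall>i<p. v i = 0)) \<and>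
      (\<forall>i<p. is_orth_proj (Qs i) (Ls i))
    \<longrightarrow> direct_convex_sum (fconv_hull (\<Union>i<p. face (Qs i))) p (\<lambda>i. face (Qs i)))
   \<and>
   (\<forall>(x :: nat \<Rightarrow> complex^'n) (p::nat).
      (\<forall>i<p. norm (x i) = 1) \<and>
      (\<forall>c::nat \<Rightarrow> complex. (\<Sum>i<p. c i *s x i) = 0 \<longrightarrow> (\<forall>i<p. c i = 0))
    \<longrightarrow> (\<forall>r::nat \<Rightarrow> real. (\<lambda>A. \<Sum>i<p. of_real (r i) * vstate (x i) A) = (\<lambda>A. 0)
            \<longrightarrow> (\<forall>i<p. r i = 0)) \<and>
        is_simplex (fconv_hull (vstate ` x ` {..<p})))"
proof (rule conjI; (intro allI impI)?)
  fix L :: "(complex^'n) set" and Ls :: "nat \<Rightarrow> (complex^'n) set" and Qs :: "nat \<Rightarrow> complex^'n^'n" and p :: nat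
  assume H: "(\<forall>i<p. csubspace (Ls i)) \<and>
      L = {(\<Sum>i<p. v i) | v. \<forall>i<p. v i \<in> Ls i} \<and>
      (\<forall>v. (\<forall>i<p. v i \<in> Ls i) \<and> (\<Sum>i<p. v i) = 0 \<longrightarrow> (\<forall>i<p. v i = 0)) \<and>
      (\<forall>i<p. is_orth_proj (Qs i) (Ls i))"
  have subs: "\<forall>i<p. csubspace (Ls i)" and ind: "\<forall>v. (\<forall>i<p. v i \<in> Ls i) \<and> (\<Sum>i<p. v i) = 0 \<longrightarrow> (\<forall>i<p. v i = 0)"
    and orth: "\<forall>i<p. is_orth_proj (Qs i) (Ls i)" using H by auto
  have "\<forall>i. \<exists>E. i < p \<longrightarrow> (\<forall>j<p. \<forall>y\<in>Ls j. E *v y = (if j = i then y else 0))"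
    using exists_E[OF subs ind] by blast
  then obtain Es where Es: "\<And>i. i < p \<Longrightarrow> \<forall>j<p. \<forall>y\<in>Ls j. Es i *v y = (if j = i then y else 0)"
    by (metis (no_types))
  have sa: "\<forall>j<p. madj (Qs j) = Qs j" using orth by (auto simp: is_orth_proj_def)
  have E: "\<forall>i<p. \<forall>j<p. Es i ** Qs j = (if i = j then Qs j else 0)"
  proof (intro allI impI)
    fix i j assume ip: "i < p" and jp: "j < p"
    have r: "\<forall>v. Qs j *v v \<in> Ls j" using orth jp by (auto simp: is_orth_proj_def)
    show "Es i ** Qs j = (if i = j then Qs j else 0)"
    proof (rule E_on_proj[OF r])
      show "\<forall>y\<in>Ls j. Es i *v y = (if j = i then y else 0)" using Es[OF ip] jp by blast
    qed
  qed
  have C: "\<forall>j<p. \<forall>\<psi>\<in>face (Qs j). \<psi> (Qs j) = 1 \<and> \<psi> 0 = 0 \<and> (\<forall>A. \<psi> A = \<psi> (Qs j ** A ** Qs j))"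
  proof (intro allI impI ballI conjI)
    fix j \<psi> A assume jp: "j < p" and ps: "\<psi> \<in> face (Qs j)"
    show "\<psi> (Qs j) = 1" "\<psi> 0 = 0" using ps state_zero by (auto simp: face_def)
    show "\<psi> A = \<psi> (Qs j ** A ** Qs j)" using face_support[OF ps] orth jp by blast
  qed
  have cvx: "\<forall>i<p. \<forall>(K::nat) c g. (\<forall>k<K. 0 \<le> c k \<and> g k \<in> face (Qs i)) \<and> (\<Sum>k<K. c k) = 1 \<longrightarrow>
                  (\<lambda>A. \<Sum>k<K. of_real (c k) * g k A) \<in> face (Qs i)"
    using face_cvx by blast
  show "direct_convex_sum (fconv_hull (\<Union>i<p. face (Qs i))) p (\<lambda>i. face (Qs i))"
    unfolding direct_convex_sum_def
  proof (rule ballI, rule conjI)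
    fix \<omega> assume "\<omega> \<in> fconv_hull (\<Union>i<p. face (Qs i))"
    then show "\<exists>I lam w. dcs_rep p (\<lambda>i. face (Qs i)) \<omega> I lam w" by (rule exi[OF cvx])
  next
    fix \<omega>
    show "\<forall>I lam w J mu v. dcs_rep p (\<lambda>i. face (Qs i)) \<omega> I lam w \<and> dcs_rep p (\<lambda>i. face (Qs i)) \<omega> J mu v \<longrightarrow> I = J \<and> (\<forall>i\<in>I. lam i = mu i \<and> w i = v i)"
    proof (intro allI impI)
      fix I lam w J mu v
      assume "dcs_rep p (\<lambda>i. face (Qs i)) \<omega> I lam w \<and> dcs_rep p (\<lambda>i. face (Qs i)) \<omega> J mu v"
      then show "I = J \<and> (\<forall>i\<in>I. lam i = mu i \<and> w i = v i)"
        using uniq[OF sa E C] by blast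
    qed
  qed
next
  fix x :: "nat \<Rightarrow> complex^'n" and p :: nat
  assume H: "(\<forall>i<p. norm (x i) = 1) \<and>
      (\<forall>c::nat \<Rightarrow> complex. (\<Sum>i<p. c i *s x i) = 0 \<longrightarrow> (\<forall>i<p. c i = 0))"
  have cx: "\<And>i. i < p \<Longrightarrow> cinner (x i) (x i) = 1" using H cinner_norm by blast
  have lind: "\<forall>c::nat \<Rightarrow> complex. (\<Sum>i<p. c i *s x i) = 0 \<longrightarrow> (\<forall>i<p. c i = 0)" using H by blast
  define Ls where "Ls = (\<lambda>i. {c *s x i | c. True})"
  define Qs where "Qs = (\<lambda>i. rk1 (x i))"
  have subs: "\<forall>i<p. csubspace (Ls i)"
  proof (intro allI impI)
    fix i
    have "0 = (0::complex) *s x i" by simp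
    moreover have "a *s x i + b *s x i = (a + b) *s x i" for a b by (simp add: vector_sadd_rdistrib)
    moreover have "d *s (a *s x i) = (d * a) *s x i" for a d by simp
    ultimately show "csubspace (Ls i)" unfolding csubspace_def Ls_def by blast
  qed
  have ind: "\<forall>v. (\<forall>i<p. v i \<in> Ls i) \<and> (\<Sum>i<p. v i) = 0 \<longrightarrow> (\<forall>i<p. v i = 0)"
  proof (intro allI impI)
    fix v i assume a: "(\<forall>i<p. v i \<in> Ls i) \<and> (\<Sum>i<p. v i) = 0" and ip: "i < p"
    have "\<forall>i. \<exists>c. i < p \<longrightarrow> v i = c *s x i" using a unfolding Ls_def by blast
    then obtain cc where cc: "\<And>i. i < p \<Longrightarrow> v i = cc i *s x i" by metis
    have "(\<Sum>i<p. cc i *s x i) = 0" using a cc by simp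
    then have "cc i = 0" using lind ip by blast
    then show "v i = 0" using cc ip by simp
  qed
  have "\<forall>i. \<exists>E. i < p \<longrightarrow> (\<forall>j<p. \<forall>y\<in>Ls j. E *v y = (if j = i then y else 0))"
    using exists_E[OF subs ind] by blast
  then obtain Es where Es: "\<And>i. i < p \<Longrightarrow> \<forall>j<p. \<forall>y\<in>Ls j. Es i *v y = (if j = i then y else 0)"
    by (metis (no_types))
  have sa: "\<forall>j<p. madj (Qs j) = Qs j" by (simp add: Qs_def rk1_adj)
  have E: "\<forall>i<p. \<forall>j<p. Es i ** Qs j = (if i = j then Qs j else 0)"
  proof (intro allI impI)
    fix i j assume ip: "i < p" and jp: "j < p"
    have r: "\<forall>v. Qs j *v v \<in> Ls j" by (auto simp: Qs_def Ls_def rk1_mv)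
    show "Es i ** Qs j = (if i = j then Qs j else 0)"
    proof (rule E_on_proj[OF r])
      show "\<forall>y\<in>Ls j. Es i *v y = (if j = i then y else 0)" using Es[OF ip] jp by blast
    qed
  qed
  have rpart: "\<forall>r::nat \<Rightarrow> real. (\<lambda>A. \<Sum>i<p. of_real (r i) * vstate (x i) A) = (\<lambda>A. 0) \<longrightarrow> (\<forall>i<p. r i = 0)"
  proof (intro allI impI)
    fix r :: "nat \<Rightarrow> real" and i
    assume rz: "(\<lambda>A. \<Sum>i<p. of_real (r i) * vstate (x i) A) = (\<lambda>A. 0)" and ip: "i < p"
    define \<phi> where "\<phi> = (\<lambda>i A. of_real (r i) * vstate (x i) A)"
    have sup: "\<forall>j<p. \<forall>A. \<phi> j A = \<phi> j (Qs j ** A ** Qs j)"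
      unfolding \<phi>_def Qs_def using vstate_support cx by metis
    have z: "\<forall>j<p. \<phi> j 0 = 0" by (simp add: \<phi>_def vstate_zero)
    have s0: "\<forall>A. (\<Sum>j<p. \<phi> j A) = 0" using rz unfolding \<phi>_def by metis
    have "\<phi> i (mat 1) = 0" by (rule core[OF sa E sup z s0 ip])
    then show "r i = 0" using vstate_one[OF cx[OF ip]] by (simp add: \<phi>_def)
  qed
  have Cs: "\<forall>j<p. \<forall>\<psi>\<in>{vstate (x j)}. \<psi> (Qs j) = 1 \<and> \<psi> 0 = 0 \<and> (\<forall>A. \<psi> A = \<psi> (Qs j ** A ** Qs j))"
    using cx vstate_rk1 vstate_zero unfolding Qs_def by (auto intro!: vstate_support)
  have cvx: "\<forall>i<p. \<forall>(K::nat) c g. (\<forall>k<K. 0 \<le> c k \<and> g k \<in> {vstate (x i)}) \<and> (\<Sum>k<K. c k) = 1 \<longrightarrow>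
                  (\<lambda>A. \<Sum>k<K. of_real (c k) * g k A) \<in> {vstate (x i)}"
    using sing_cvx by blast
  have hull: "vstate ` x ` {..<p} = (\<Union>i<p. {vstate (x i)})" by auto
  have spart: "is_simplex (fconv_hull (vstate ` x ` {..<p}))"
    unfolding is_simplex_def
  proof (intro exI)
    show "direct_convex_sum (fconv_hull (vstate ` x ` {..<p})) p (\<lambda>i. {vstate (x i)})"
      unfolding direct_convex_sum_def hull
    proof (rule ballI, rule conjI)
      fix \<omega> assume "\<omega> \<in> fconv_hull (\<Union>i<p. {vstate (x i)})"
      then show "\<exists>I lam w. dcs_rep p (\<lambda>i. {vstate (x i)}) \<omega> I lam w" by (rule exi[OF cvx])
    next
      fix \<omega>
      show "\<forall>I lam w J mu v. dcs_rep p (\<lambda>i. {vstate (x i)}) \<omega> I lam w \<and> dcs_rep p (\<lambda>i. {vstate (x i)}) \<omega> J mu v \<longrightarrow> I = J \<and> (\<forall>i\<in>I. lam i = mu i \<and> w i = v i)"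
      proof (intro allI impI)
        fix I lam w J mu v
        assume "dcs_rep p (\<lambda>i. {vstate (x i)}) \<omega> I lam w \<and> dcs_rep p (\<lambda>i. {vstate (x i)}) \<omega> J mu v"
        then show "I = J \<and> (\<forall>i\<in>I. lam i = mu i \<and> w i = v i)"
          using uniq[OF sa E Cs] by blast
      qed
    qed
  qed
  from rpart spart show "(\<forall>r::nat \<Rightarrow> real. (\<lambda>A. \<Sum>i<p. of_real (r i) * vstate (x i) A) = (\<lambda>A. 0)
            \<longrightarrow> (\<forall>i<p. r i = 0)) \<and> is_simplex (fconv_hull (vstate ` x ` {..<p}))" by (rule conjI)
qed

end
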